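(* Let $G$ be a quadrangulation, let $v$ be a vertex of $G$, and let $i$ be an integer with $1 \leq i \leq e(v)-1$, where $e(v)=\max_{u\in V(G)} d_G(v,u)$ is the eccentricity of $v$. Then for every active vertex $w \in N_i(v)$ there exists another active vertex $w' \in N_i(v)$, $w'\neq w$, such that $w$ and $w'$ lie on a common face of $G$.
   Context: A quadrangulation is a maximal bipartite planar graph, considered with a plane embedding; equivalently, a simple connected plane bipartite graph in which every face is bounded by a cycle of length $4$. For a vertex $v$ and an integer $i\ge 0$, $N_i(v)$ denotes the set of vertices at distance exactly $i$ from $v$. Given the fixed vertex $v$, a vertex in $N_i(v)$ is called active if it has a neighbour in $N_{i+1}(v)$. *)

theory Defs
  imports Main "HOL-Combinatorics.Permutations"
begin

definition simple_graph :: "'v set \<Rightarrow> ('v \<Rightarrow> 'v \<Rightarrow> bool) \<Rightarrow> bool" where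
  "simple_graph V E \<longleftrightarrow> finite V \<and> (\<forall>u w. E u w \<longrightarrow> u \<in> V \<and> w \<in> V \<and> u \<noteq> w \<and> E w u)"

definition connected_graph :: "'v set \<Rightarrow> ('v \<Rightarrow> 'v \<Rightarrow> bool) \<Rightarrow> bool" where
  "connected_graph V E \<longleftrightarrow> (\<forall>u\<in>V. \<forall>w\<in>V. \<exists>n. (E ^^ n) u w)"

definition bipartite_graph :: "'v set \<Rightarrow> ('v \<Rightarrow> 'v \<Rightarrow> bool) \<Rightarrow> bool" where
  "bipartite_graph V E \<longleftrightarrow> (\<exists>A. A \<subseteq> V \<and> (\<forall>u w. E u w \<longrightarrow> (u \<in> A \<longleftrightarrow> w \<notin> A)))"

definition gdist :: "('v \<Rightarrow> 'v \<Rightarrow> bool) \<Rightarrow> 'v \<Rightarrow> 'v \<Rightarrow> nat" where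
  "gdist E u w = (LEAST n. (E ^^ n) u w)"

definition ecc :: "'v set \<Rightarrow> ('v \<Rightarrow> 'v \<Rightarrow> bool) \<Rightarrow> 'v \<Rightarrow> nat" where
  "ecc V E v = Max (gdist E v ` V)"

definition layer :: "'v set \<Rightarrow> ('v \<Rightarrow> 'v \<Rightarrow> bool) \<Rightarrow> 'v \<Rightarrow> nat \<Rightarrow> 'v set" where
  "layer V E v i = {u \<in> V. gdist E v u = i}"

definition active :: "'v set \<Rightarrow> ('v \<Rightarrow> 'v \<Rightarrow> bool) \<Rightarrow> 'v \<Rightarrow> nat \<Rightarrow> 'v \<Rightarrow> bool" where
  "active V E v i w \<longleftrightarrow> w \<in> layer V E v i \<and> (\<exists>x. E w x \<and> x \<in> layer V E v (Suc i))"

text \<open>Combinatorial plane embeddings via rotation systems.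
  rot u is a cyclic permutation of the neighbours of u (the clockwise order around u).\<close>
definition rotation_system :: "'v set \<Rightarrow> ('v \<Rightarrow> 'v \<Rightarrow> bool) \<Rightarrow> ('v \<Rightarrow> 'v \<Rightarrow> 'v) \<Rightarrow> bool" where
  "rotation_system V E rot \<longleftrightarrow>
     (\<forall>u\<in>V. rot u permutes {w. E u w} \<and>
            (\<forall>w w'. E u w \<longrightarrow> E u w' \<longrightarrow> (\<exists>k. (rot u ^^ k) w = w')))"

definition darts :: "('v \<Rightarrow> 'v \<Rightarrow> bool) \<Rightarrow> ('v \<times> 'v) set" where
  "darts E = {(u, w). E u w}"

definition face_step :: "('v \<Rightarrow> 'v \<Rightarrow> 'v) \<Rightarrow> 'v \<times> 'v \<Rightarrow> 'v \<times> 'v" where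
  "face_step rot d = (snd d, rot (snd d) (fst d))"

definition face_of :: "('v \<Rightarrow> 'v \<Rightarrow> 'v) \<Rightarrow> 'v \<times> 'v \<Rightarrow> ('v \<times> 'v) set" where
  "face_of rot d = {(face_step rot ^^ k) d | k. True}"

definition faces :: "('v \<Rightarrow> 'v \<Rightarrow> bool) \<Rightarrow> ('v \<Rightarrow> 'v \<Rightarrow> 'v) \<Rightarrow> ('v \<times> 'v) set set" where
  "faces E rot = face_of rot ` darts E"

definition face_vertices :: "('v \<times> 'v) set \<Rightarrow> 'v set" where
  "face_vertices f = fst ` f"

text \<open>Plane (genus 0) embedding of a connected graph: Euler's formula V - E + F = 2.\<close>
definition plane_graph :: "'v set \<Rightarrow> ('v \<Rightarrow> 'v \<Rightarrow> bool) \<Rightarrow> ('v \<Rightarrow> 'v \<Rightarrow> 'v) \<Rightarrow> bool" where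
  "plane_graph V E rot \<longleftrightarrow> simple_graph V E \<and> connected_graph V E \<and> V \<noteq> {} \<and>
     rotation_system V E rot \<and>
     int (card V) - int (card (darts E) div 2) + int (card (faces E rot)) = 2"

definition quadrangulation :: "'v set \<Rightarrow> ('v \<Rightarrow> 'v \<Rightarrow> bool) \<Rightarrow> ('v \<Rightarrow> 'v \<Rightarrow> 'v) \<Rightarrow> bool" where
  "quadrangulation V E rot \<longleftrightarrow> plane_graph V E rot \<and> bipartite_graph V E \<and>
     (\<forall>f\<in>faces E rot. card f = 4 \<and> card (face_vertices f) = 4)"

end

theory Submission
  imports Defs
begin

lemma bip_parity:
  assumes "\<forall>u w. E u w \<longrightarrow> (u \<in> A \<longleftrightarrow> w \<notin> A)"
  shows "(E ^^ n) u x \<Longrightarrow> (x \<in> A \<longleftrightarrow> (u \<in> A \<longleftrightarrow> even n))"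
proof (induction n arbitrary: x)
  case 0
  then show ?case by simp
next
  case (Suc n)
  then obtain y where "(E ^^ n) u y" "E y x" by (auto elim: relpowp_Suc_E)
  with Suc.IH assms show ?case by auto
qed

lemma gdist_reach:
  assumes "connected_graph V E" "u \<in> V" "x \<in> V"
  shows "(E ^^ gdist E u x) u x"
proof -
  from assms obtain n where "(E ^^ n) u x" unfolding connected_graph_def by blast
  then show ?thesis unfolding gdist_def by (rule LeastI)
qed

lemma gdist_le: "(E ^^ n) u x \<Longrightarrow> gdist E u x \<le> n"
  unfolding gdist_def by (rule Least_le)

lemma gdist_edge:
  assumes "connected_graph V E" "u \<in> V" "x \<in> V" "E x y"
  shows "gdist E u y \<le> Suc (gdist E u x)"
proof -
  have "(E ^^ Suc (gdist E u x)) u y"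
    using gdist_reach[OF assms(1-3)] assms(4) by (rule relpowp_Suc_I)
  then show ?thesis by (rule gdist_le)
qed

lemma gdist_parity:
  assumes "connected_graph V E" "bipartite_graph V E" "simple_graph V E" "u \<in> V" "E x y"
  shows "gdist E u x \<noteq> gdist E u y"
proof -
  obtain A where A: "\<forall>u w. E u w \<longrightarrow> (u \<in> A \<longleftrightarrow> w \<notin> A)"
    using assms(2) unfolding bipartite_graph_def by blast
  have V: "x \<in> V" "y \<in> V" using assms(3,5) unfolding simple_graph_def by auto
  have "x \<in> A \<longleftrightarrow> (u \<in> A \<longleftrightarrow> even (gdist E u x))"
    by (rule bip_parity[OF A gdist_reach[OF assms(1,4) V(1)]])
  moreover have "y \<in> A \<longleftrightarrow> (u \<in> A \<longleftrightarrow> even (gdist E u y))"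
    by (rule bip_parity[OF A gdist_reach[OF assms(1,4) V(2)]])
  moreover have "x \<in> A \<longleftrightarrow> y \<notin> A" using A assms(5) by blast
  ultimately show ?thesis by auto
qed

lemma funpow_cancel:
  assumes inj: "inj_on s D" and inD: "\<And>n. (s ^^ n) d \<in> D"
  shows "(s ^^ (j + m)) d = (s ^^ j) d \<Longrightarrow> (s ^^ m) d = d"
proof (induction j)
  case 0
  then show ?case by simp
next
  case (Suc j)
  have "s ((s ^^ (j + m)) d) = s ((s ^^ j) d)"
    using Suc.prems by (simp add: funpow_swap1)
  then have "(s ^^ (j + m)) d = (s ^^ j) d"
    using inj inD by (auto dest: inj_onD)
  then show ?case by (rule Suc.IH)
qed

lemma orbit4:
  assumes inj: "inj_on s D" and inD: "\<And>n. (s ^^ n) d \<in> D"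
    and c4: "card (range (\<lambda>k. (s ^^ k) d)) = 4"
  shows "(s ^^ 4) d = d \<and> range (\<lambda>k. (s ^^ k) d) = (\<lambda>k. (s ^^ k) d) ` {..<4}"
proof -
  define g where "g = (\<lambda>k. (s ^^ k) d)"
  have c4': "card (range g) = 4" unfolding g_def by (rule c4)
  have fin: "finite (range g)"
  proof (rule ccontr)
    assume "infinite (range g)"
    then have "card (range g) = 0" by (rule card.infinite)
    with c4' show False by simp
  qed
  have "\<not> inj_on g {..<5}"
  proof
    assume "inj_on g {..<5}"
    then have "card (g ` {..<5}) = card {..<5::nat}" by (rule card_image)
    then have "card (g ` {..<5}) = 5" by simp
    moreover have "card (g ` {..<5}) \<le> card (range g)"
      using fin by (intro card_mono) auto
    ultimately show False using c4' by simp
  qed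
  then obtain j0 k0 where jk0: "j0 < 5" "k0 < 5" "j0 \<noteq> k0" "g j0 = g k0"
    unfolding inj_on_def by auto
  obtain j k where jk: "j < k" "k < 5" "g j = g k"
  proof (cases "j0 < k0")
    case True
    then show ?thesis using that jk0 by blast
  next
    case False
    then have "k0 < j0" using jk0 by simp
    then show ?thesis using that[of k0 j0] jk0 by simp
  qed
  define m where "m = k - j"
  have m: "1 \<le> m" "m \<le> 4" using jk m_def by auto
  have km: "k = j + m" using jk m_def by simp
  have "(s ^^ (j + m)) d = (s ^^ j) d" using jk(3) km unfolding g_def by simp
  then have gm: "(s ^^ m) d = d" by (rule funpow_cancel[OF inj inD])
  have mod: "g n = g (n mod m)" for n
    unfolding g_def using funpow_mod_eq[where f=s and n=m and x=d and m=n, OF gm] by simp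
  have rg: "range g = g ` {..<m}"
  proof
    show "range g \<subseteq> g ` {..<m}"
    proof
      fix x assume "x \<in> range g"
      then obtain n where "x = g n" by blast
      then have "x = g (n mod m)" using mod[of n] by (rule trans)
      moreover have "n mod m < m" using m by simp
      ultimately show "x \<in> g ` {..<m}" by blast
    qed
  qed auto
  have "card (g ` {..<m}) \<le> card {..<m}" by (rule card_image_le) simp
  then have "card (range g) \<le> m" using rg by simp
  then have m4: "m = 4" using c4' m by simp
  have "(s ^^ 4) d = d" using gm m4 by simp
  moreover have "range (\<lambda>k. (s ^^ k) d) = (\<lambda>k. (s ^^ k) d) ` {..<4}"
    using rg m4 unfolding g_def by simp
  ultimately show ?thesis by blast
qed

theorem lemma2p4:
  fixes V :: "'v set" and E :: "'v \<Rightarrow> 'v \<Rightarrow> bool" and rot :: "'v \<Rightarrow> 'v \<Rightarrow> 'v"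
    and v w :: 'v and i :: nat
  assumes "quadrangulation V E rot"
    and "v \<in> V"
    and "1 \<le> i" and "i \<le> ecc V E v - 1"
    and "active V E v i w"
  shows "\<exists>w'. active V E v i w' \<and> w' \<noteq> w \<and>
           (\<exists>f\<in>faces E rot. w \<in> face_vertices f \<and> w' \<in> face_vertices f)"
proof -
  have sg: "simple_graph V E" and cg: "connected_graph V E" and rs: "rotation_system V E rot"
    and bg: "bipartite_graph V E"
    and fc: "\<forall>f\<in>faces E rot. card f = 4 \<and> card (face_vertices f) = 4"
    using assms(1) unfolding quadrangulation_def plane_graph_def by auto
  have Ev: "\<And>a b. E a b \<Longrightarrow> a \<in> V \<and> b \<in> V \<and> a \<noteq> b \<and> E b a"
    using sg unfolding simple_graph_def by blast
  have perm: "\<And>u. u \<in> V \<Longrightarrow> rot u permutes {z. E u z}"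
    using rs unfolding rotation_system_def by blast
  have rotE: "\<And>u z. E u z \<Longrightarrow> E u (rot u z)"
  proof -
    fix u z assume "E u z"
    then have "u \<in> V" using Ev by blast
    with \<open>E u z\<close> show "E u (rot u z)" using permutes_in_image[OF perm] by blast
  qed
  let ?d = "gdist E v"
  have edge: "\<And>x y. E x y \<Longrightarrow> ?d y \<le> Suc (?d x)"
    using gdist_edge[OF cg assms(2)] Ev by blast
  have par: "\<And>x y. E x y \<Longrightarrow> ?d x \<noteq> ?d y"
    using gdist_parity[OF cg bg sg assms(2)] by blast
  obtain x where wV: "w \<in> V" and dw: "?d w = i" and Ewx: "E w x" and dx: "?d x = Suc i"
    using assms(5) unfolding active_def layer_def by blast
  obtain j where ij: "i = Suc j" using assms(3) by (cases i) auto
  have "(E ^^ Suc j) v w" using gdist_reach[OF cg assms(2) wV] dw ij by simp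
  then obtain y where "(E ^^ j) v y" "E y w" by (auto elim: relpowp_Suc_E)
  then have dy: "?d y \<le> j" and Ewy: "E w y" using gdist_le Ev by auto
  obtain k where ky: "(rot w ^^ k) x = y"
    using rs wV Ewx Ewy unfolding rotation_system_def by blast
  have iterE: "\<And>n. E w ((rot w ^^ n) x)"
  proof -
    fix n show "E w ((rot w ^^ n) x)"
      by (induction n) (auto simp: Ewx rotE)
  qed
  define P where "P = (\<lambda>n. ?d ((rot w ^^ n) x) \<noteq> Suc i)"
  have Pk: "P k" using ky dy ij P_def by simp
  define k0 where "k0 = (LEAST n. P n)"
  have Pk0: "P k0" using Pk k0_def by (metis LeastI)
  have k0nz: "k0 \<noteq> 0"
  proof
    assume "k0 = 0"
    then show False using Pk0 P_def dx by simp
  qed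
  then obtain k1 where k1: "k0 = Suc k1" by (cases k0) auto
  have nP: "\<not> P k1" using k1 k0_def by (metis Suc_n_not_le_n Least_le)
  define a where "a = (rot w ^^ k1) x"
  define b where "b = rot w a"
  have da: "?d a = Suc i" using nP P_def a_def by simp
  have bk0: "b = (rot w ^^ k0) x" using k1 a_def b_def by simp
  have db: "?d b \<noteq> Suc i" using Pk0 P_def bk0 by simp
  have Ewa: "E w a" and Ewb: "E w b" using iterE a_def bk0 by auto
  have Eaw: "E a w" using Ewa Ev by blast
  have db': "?d b \<le> i" using edge[OF Ewb] dw db by simp
  define s where "s = face_step rot"
  define d0 where "d0 = (a, w)"
  have s_darts: "\<And>p. p \<in> darts E \<Longrightarrow> s p \<in> darts E"
  proof -
    fix p assume "p \<in> darts E"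
    then obtain p1 p2 where pp: "p = (p1, p2)" "E p1 p2" unfolding darts_def by auto
    then have "E p2 p1" using Ev by blast
    then have "E p2 (rot p2 p1)" by (rule rotE)
    then show "s p \<in> darts E" using pp by (simp add: s_def face_step_def darts_def)
  qed
  have s_inj: "inj_on s (darts E)"
  proof (rule inj_onI)
    fix p q assume p: "p \<in> darts E" and q: "q \<in> darts E" and eq: "s p = s q"
    obtain p1 p2 where pp: "p = (p1, p2)" by (cases p)
    obtain q1 q2 where qq: "q = (q1, q2)" by (cases q)
    have e: "p2 = q2" "rot p2 p1 = rot q2 q1" using eq pp qq unfolding s_def face_step_def by auto
    have "p2 \<in> V" using p pp Ev unfolding darts_def by auto
    then have "p1 = q1" using e permutes_inj[OF perm] by (metis injD)
    then show "p = q" using pp qq e by simp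
  qed
  have d0D: "d0 \<in> darts E" using Eaw d0_def darts_def by auto
  have inD: "\<And>n. (s ^^ n) d0 \<in> darts E"
  proof -
    fix n show "(s ^^ n) d0 \<in> darts E" by (induction n) (auto simp: d0D s_darts)
  qed
  define f where "f = face_of rot d0"
  have frange: "f = range (\<lambda>k. (s ^^ k) d0)" unfolding f_def face_of_def s_def by auto
  have fF: "f \<in> faces E rot" unfolding faces_def f_def using d0D by blast
  then have cf: "card f = 4" and cfv: "card (face_vertices f) = 4" using fc by auto
  have o4: "(s ^^ 4) d0 = d0" and fe: "f = (\<lambda>k. (s ^^ k) d0) ` {..<4}"
    using orbit4[OF s_inj inD] cf frange by auto
  define c where "c = rot b w"
  have sp: "\<And>p q. s (p,q) = (q, rot q p)" by (simp add: s_def face_step_def)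
  have sS: "\<And>n. (s ^^ Suc n) d0 = s ((s ^^ n) d0)" by simp
  have s1: "(s ^^ 1) d0 = (w, b)" by (simp add: sp d0_def b_def)
  have s2a: "(s ^^ Suc 1) d0 = (b, c)" by (simp only: sS s1 sp c_def)
  have s3a: "(s ^^ Suc (Suc 1)) d0 = (c, rot c b)" by (simp only: sS[of "Suc 1"] s2a sp)
  have s4a: "(s ^^ Suc (Suc (Suc 1))) d0 = (rot c b, rot (rot c b) c)"
    by (simp only: sS[of "Suc (Suc 1)"] s3a sp)
  have s2: "(s ^^ 2) d0 = (b, c)" using s2a by (simp only: Suc_1)
  have s3: "(s ^^ 3) d0 = (c, rot c b)"
  proof - have e: "Suc (Suc 1) = (3::nat)" by simp show ?thesis using s3a by (simp only: e) qed
  have s4: "(s ^^ 4) d0 = (rot c b, rot (rot c b) c)"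
  proof - have e: "Suc (Suc (Suc 1)) = (4::nat)" by simp show ?thesis using s4a by (simp only: e) qed
  have cab: "rot c b = a" using s4 o4 d0_def by simp
  have Eca: "E c a" using inD[of 3] s3 cab unfolding darts_def by simp
  have Ebc: "E b c" using inD[of 2] s2 unfolding darts_def by simp
  have fset: "f = {d0, (w,b), (b,c), (c, a)}"
  proof -
    have "{..<4::nat} = {0,1,2,3}" by auto
    then have "f = {(s^^0) d0, (s^^1) d0, (s^^2) d0, (s^^3) d0}" using fe by simp
    then show ?thesis using s1 s2 s3 cab by simp
  qed
  have fv: "face_vertices f = {a, w, b, c}" unfolding face_vertices_def fset d0_def by auto
  have cw: "c \<noteq> w"
  proof
    assume "c = w"
    then have "face_vertices f = {a, w, b}" using fv by auto
    then have "card (face_vertices f) \<le> 3"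
      by (simp add: card_insert_if)
    then show False using cfv by simp
  qed
  have dc1: "?d c \<le> Suc i" using edge[OF Ebc] db' by simp
  have dc2: "Suc i \<le> Suc (?d c)" using edge[OF Eca] da by simp
  have dc3: "?d c \<noteq> Suc i" using par[OF Eca] da by simp
  have dc: "?d c = i" using dc1 dc2 dc3 by simp
  have cV: "c \<in> V" using Eca Ev by blast
  have aV: "a \<in> V" using Eca Ev by blast
  have act: "active V E v i c"
    unfolding active_def layer_def using cV dc Eca aV da by auto
  show ?thesis
    using act cw fF fv by blast
qed

end
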